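(* For any $u, v \in \mathfrak{H}$, in $\mathfrak H[[X,Y]]$ one has \begin{align*} &ug_{1}\frac{1}{1-aX} \,\mathrm{sh}_{\hbar}\, vg_{1}\frac{1}{1-aY}\\ &=\Bigl\{(1+\hbar X)\Bigl(ug_{1}\frac{1}{1-aX}\,\mathrm{sh}_{\hbar}\,v\Bigr)+(1+\hbar Y)\Bigl(u\,\mathrm{sh}_{\hbar}\,vg_{1}\frac{1}{1-aY}\Bigr)+(u\,\mathrm{sh}_{\hbar}\,v)(e_{1}-g_{1}) \Bigr\}\,g_{1}\frac{1}{1-a(X+Y+\hbar XY)}. \end{align*}
   Context: Let $\mathcal{C}=\mathbb{Q}[\hbar]$ ($\hbar$ formal), $\mathfrak{H}=\mathcal{C}\langle a,b\rangle$ the non-commutative polynomial ring in $a,b$. Put $g_1=ba$ and $e_1=b(a+\hbar)$, so $e_1-g_1=\hbar b$. The shuffle product $\mathrm{sh}_\hbar$ on $\mathfrak H$ (written infix) is the $\mathcal C$-bilinear product determined by $w\,\mathrm{sh}_\hbar\,1=1\,\mathrm{sh}_\hbar\,w=w$, $wa\,\mathrm{sh}_\hbar\,w'a=(wa\,\mathrm{sh}_\hbar\,w'+w\,\mathrm{sh}_\hbar\,w'a+\hbar(w\,\mathrm{sh}_\hbar\,w'))a$ and $wb\,\mathrm{sh}_\hbar\,w'=w\,\mathrm{sh}_\hbar\,w'b=(w\,\mathrm{sh}_\hbar\,w')b$ for $w,w'\in\mathfrak H$. It is extended to formal power series coefficientwise ($\mathcal C[[X,Y]]$-bilinearly), and $\frac{1}{1-aZ}=\sum_{n\ge0}a^nZ^n$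 for a formal power series $Z$ without constant term (the formal variables $X,Y$ commute with everything). *)

theory Defs
  imports "HOL-Computational_Algebra.Polynomial"
begin

type_synonym coef = "rat poly"

definition hbar :: coef where "hbar = [:0, 1:]"

datatype letter = La | Lb

text \<open>Elements of H = C<a,b> are finitely supported coefficient functions on words.
  We use the ambient type of all coefficient functions and impose finite support
  (predicate nc_fin) where needed.\<close>
type_synonym nc = "letter list \<Rightarrow> coef"

definition nc_supp :: "nc \<Rightarrow> letter list set" where
  "nc_supp f = {w. f w \<noteq> 0}"

definition nc_fin :: "nc \<Rightarrow> bool" where
  "nc_fin f \<longleftrightarrow> finite (nc_supp f)"

definition nc_zero :: nc where "nc_zero = (\<lambda>w. 0)"

definition nc_add :: "nc \<Rightarrow> nc \<Rightarrow> nc" where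
  "nc_add f g = (\<lambda>w. f w + g w)"

definition nc_diff :: "nc \<Rightarrow> nc \<Rightarrow> nc" where
  "nc_diff f g = (\<lambda>w. f w - g w)"

definition nc_smul :: "coef \<Rightarrow> nc \<Rightarrow> nc" where
  "nc_smul c f = (\<lambda>w. c * f w)"

definition word :: "letter list \<Rightarrow> nc" where
  "word u = (\<lambda>w. if w = u then 1 else 0)"

definition nc_mult :: "nc \<Rightarrow> nc \<Rightarrow> nc" where
  "nc_mult f g = (\<lambda>w. \<Sum>k\<le>length w. f (take k w) * g (drop k w))"

definition g1 :: nc where "g1 = word [Lb, La]"

definition e1 :: nc where "e1 = nc_add (word [Lb, La]) (nc_smul hbar (word [Lb]))"

text \<open>Shuffle product of two words. The recursion in the paper peels letters off the
  right end; shr works on the reversed words, so the head of a list is the last letter.\<close>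
fun shr :: "letter list \<Rightarrow> letter list \<Rightarrow> nc" where
  "shr [] v = word (rev v)"
| "shr u [] = word (rev u)"
| "shr (Lb # u) v = nc_mult (shr u v) (word [Lb])"
| "shr u (Lb # v) = nc_mult (shr u v) (word [Lb])"
| "shr (La # u) (La # v) =
     nc_mult (nc_add (nc_add (shr (La # u) v) (shr u (La # v))) (nc_smul hbar (shr u v)))
             (word [La])"

definition shw :: "letter list \<Rightarrow> letter list \<Rightarrow> nc" where
  "shw u v = shr (rev u) (rev v)"

definition sh :: "nc \<Rightarrow> nc \<Rightarrow> nc" where
  "sh f g = (\<lambda>w. \<Sum>u\<in>nc_supp f. \<Sum>v\<in>nc_supp g. f u * g v * shw u v w)"

text \<open>H[[X,Y]]: a series F has coefficient F i j at X^i Y^j.  Scalar series C[[X,Y]].\<close>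
type_synonym ser = "nat \<Rightarrow> nat \<Rightarrow> nc"
type_synonym sc = "nat \<Rightarrow> nat \<Rightarrow> coef"

definition ser_const :: "nc \<Rightarrow> ser" where
  "ser_const f = (\<lambda>i j. if i = 0 \<and> j = 0 then f else nc_zero)"

definition ser_add :: "ser \<Rightarrow> ser \<Rightarrow> ser" where
  "ser_add F G = (\<lambda>i j. nc_add (F i j) (G i j))"

definition ser_mult :: "ser \<Rightarrow> ser \<Rightarrow> ser" where
  "ser_mult F G = (\<lambda>i j. \<lambda>w. \<Sum>i1\<le>i. \<Sum>j1\<le>j. nc_mult (F i1 j1) (G (i - i1) (j - j1)) w)"

definition ser_sh :: "ser \<Rightarrow> ser \<Rightarrow> ser" where
  "ser_sh F G = (\<lambda>i j. \<lambda>w. \<Sum>i1\<le>i. \<Sum>j1\<le>j. sh (F i1 j1) (G (i - i1) (j - j1)) w)"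

definition ser_smul :: "sc \<Rightarrow> ser \<Rightarrow> ser" where
  "ser_smul c F = (\<lambda>i j. \<lambda>w. \<Sum>i1\<le>i. \<Sum>j1\<le>j. c i1 j1 * F (i - i1) (j - j1) w)"

definition sc_mult :: "sc \<Rightarrow> sc \<Rightarrow> sc" where
  "sc_mult c d = (\<lambda>i j. \<Sum>i1\<le>i. \<Sum>j1\<le>j. c i1 j1 * d (i - i1) (j - j1))"

definition sc_one :: sc where "sc_one = (\<lambda>i j. if i = 0 \<and> j = 0 then 1 else 0)"

fun sc_pow :: "sc \<Rightarrow> nat \<Rightarrow> sc" where
  "sc_pow c 0 = sc_one"
| "sc_pow c (Suc n) = sc_mult c (sc_pow c n)"

definition scX :: sc where "scX = (\<lambda>i j. if i = 1 \<and> j = 0 then 1 else 0)"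
definition scY :: sc where "scY = (\<lambda>i j. if i = 0 \<and> j = 1 then 1 else 0)"

definition sc_1hX :: sc where
  "sc_1hX = (\<lambda>i j. if i = 0 \<and> j = 0 then 1 else if i = 1 \<and> j = 0 then hbar else 0)"
definition sc_1hY :: sc where
  "sc_1hY = (\<lambda>i j. if i = 0 \<and> j = 0 then 1 else if i = 0 \<and> j = 1 then hbar else 0)"
definition scXYh :: sc where
  "scXYh = (\<lambda>i j. if (i = 1 \<and> j = 0) \<or> (i = 0 \<and> j = 1) then 1
                  else if i = 1 \<and> j = 1 then hbar else 0)"

text \<open>1/(1 - aZ) = sum_n a^n Z^n for Z without constant term.  The coefficient of
  X^i Y^j only receives contributions from n \<le> i + j (Z^n has order \<ge> n).\<close>
definition geom :: "sc \<Rightarrow> ser" where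
  "geom Z = (\<lambda>i j. \<lambda>w. \<Sum>n\<le>i+j. sc_pow Z n i j * word (replicate n La) w)"

end

theory Submission
  imports Defs
begin

lemma word_apply: "word u w = (if w = u then 1 else 0)" by (simp add: word_def)

lemma rm_Nil[simp]: "nc_mult F (word [x]) [] = 0"
  by (simp add: nc_mult_def word_def)

lemma rm_snoc[simp]: "nc_mult F (word [x]) (q @ [y]) = (if y = x then F q else 0)"
proof -
  have "nc_mult F (word [x]) (q @ [y]) = (\<Sum>k\<le>length q. F (take k (q@[y])) * word [x] (drop k (q@[y]))) + F (q@[y]) * word [x] []"
    by (simp add: nc_mult_def)
  also have "(\<Sum>k\<le>length q. F (take k (q@[y])) * word [x] (drop k (q@[y]))) = (\<Sum>k\<le>length q. if k = length q then (if y = x then F q else 0) else 0)"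
    by (rule sum.cong) (auto simp: word_def)
  finally show ?thesis by (simp add: word_def)
qed

lemma nc_mult_word_Nil[simp]: "nc_mult F (word []) = F"
proof
  fix w
  have "nc_mult F (word []) w = (\<Sum>k\<le>length w. if k = length w then F w else 0)"
    unfolding nc_mult_def by (rule sum.cong) (auto simp: word_def)
  then show "nc_mult F (word []) w = F w" by simp
qed

lemma word_snoc: "nc_mult (word s) (word [x]) = word (s @ [x])"
proof
  fix w show "nc_mult (word s) (word [x]) w = word (s @ [x]) w"
    by (cases w rule: rev_cases) (auto simp: word_apply)
qed

lemma nc_mult_assoc_letter:
  "nc_mult F (nc_mult X (word [x])) = nc_mult (nc_mult F X) (word [x])"
proof
  fix w show "nc_mult F (nc_mult X (word [x])) w = nc_mult (nc_mult F X) (word [x]) w"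
  proof (cases w rule: rev_cases)
    case Nil then show ?thesis by (simp add: nc_mult_def)
  next
    case (snoc p y)
    have "nc_mult F (nc_mult X (word [x])) w =
      (\<Sum>k\<le>length p. F (take k (p@[y])) * nc_mult X (word [x]) (drop k (p@[y]))) + F (p@[y]) * nc_mult X (word [x]) []"
      unfolding nc_mult_def[of F] by (simp add: snoc)
    also have "(\<Sum>k\<le>length p. F (take k (p@[y])) * nc_mult X (word [x]) (drop k (p@[y])))
       = (\<Sum>k\<le>length p. if y = x then F (take k p) * X (drop k p) else 0)"
      by (rule sum.cong) auto
    finally have 1: "nc_mult F (nc_mult X (word [x])) w = (if y = x then (\<Sum>k\<le>length p. F (take k p) * X (drop k p)) else 0)"
      by simp
    have 2: "nc_mult (nc_mult F X) (word [x]) w = (if y = x then (\<Sum>k\<le>length p. F (take k p) * X (drop k p)) else 0)"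
      by (simp add: snoc) (simp add: nc_mult_def)
    show ?thesis using 1 2 by simp
  qed
qed

lemma nc_mult_word_snoc: "nc_mult G (word (t @ [x])) = nc_mult (nc_mult G (word t)) (word [x])"
  by (simp add: word_snoc[symmetric] nc_mult_assoc_letter)

lemma nc_mult_word_word: "nc_mult (nc_mult F (word s)) (word t) = nc_mult F (word (s @ t))"
proof (induction t rule: rev_induct)
  case Nil then show ?case by simp
next
  case (snoc x t)
  then show ?case by (metis append_assoc nc_mult_word_snoc)
qed

lemma nc_mult_add_left: "nc_mult (nc_add F G) H = nc_add (nc_mult F H) (nc_mult G H)"
  by (auto simp: nc_mult_def nc_add_def algebra_simps sum.distrib)
lemma nc_mult_add_right: "nc_mult H (nc_add F G) = nc_add (nc_mult H F) (nc_mult H G)"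
  by (auto simp: nc_mult_def nc_add_def algebra_simps sum.distrib)
lemma nc_mult_smul_left: "nc_mult (nc_smul c F) H = nc_smul c (nc_mult F H)"
  by (auto simp: nc_mult_def nc_smul_def algebra_simps sum_distrib_left)
lemma nc_mult_smul_right: "nc_mult H (nc_smul c F) = nc_smul c (nc_mult H F)"
  by (auto simp: nc_mult_def nc_smul_def algebra_simps sum_distrib_left)
lemma nc_mult_zero_left: "nc_mult nc_zero H = nc_zero"
  by (auto simp: nc_mult_def nc_zero_def)
lemma nc_mult_zero_right: "nc_mult H nc_zero = nc_zero"
  by (auto simp: nc_mult_def nc_zero_def)

lemma diff_e1_g1: "nc_diff e1 g1 = nc_smul hbar (word [Lb])"
  by (auto simp: nc_diff_def e1_def g1_def nc_add_def nc_smul_def)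

lemma shr_Nil2[simp]: "shr u [] = word (rev u)" by (cases u) auto

lemma shr_Lb_right: "shr u (Lb # v) = nc_mult (shr u v) (word [Lb])"
proof (induction u arbitrary: v)
  case Nil then show ?case by (simp add: word_snoc)
next
  case (Cons y u)
  show ?case
  proof (cases y)
    case La then show ?thesis by simp
  next
    case Lb
    show ?thesis
    proof (cases v)
      case Nil then show ?thesis using Cons Lb by (simp add: word_snoc)
    next
      case (Cons z v') then show ?thesis using Cons.IH Lb by simp
    qed
  qed
qed

lemma shw_b_right: "shw u (v @ [Lb]) = nc_mult (shw u v) (word [Lb])"
  by (simp add: shw_def shr_Lb_right)

lemma shw_b_left: "shw (u @ [Lb]) v = nc_mult (shw u v) (word [Lb])"
proof (cases "rev v")
  case Nil then show ?thesis by (simp add: shw_def word_snoc)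
next
  case (Cons z v') then show ?thesis by (simp add: shw_def)
qed

lemma shw_aa: "shw (u @ [La]) (v @ [La]) =
   nc_mult (nc_add (nc_add (shw (u @ [La]) v) (shw u (v @ [La]))) (nc_smul hbar (shw u v))) (word [La])"
  by (simp add: shw_def)

definition shK :: "(letter list \<Rightarrow> letter list \<Rightarrow> nc) \<Rightarrow> nc \<Rightarrow> nc \<Rightarrow> nc" where
  "shK K f g = (\<lambda>w. \<Sum>u\<in>nc_supp f. \<Sum>v\<in>nc_supp g. f u * g v * K u v w)"

lemma sh_shK: "sh = shK shw" by (auto simp: sh_def shK_def fun_eq_iff)

lemma supp_rm: "nc_supp (nc_mult F (word [x])) = (\<lambda>u. u @ [x]) ` nc_supp F"
proof (rule set_eqI)
  fix w show "w \<in> nc_supp (nc_mult F (word [x])) \<longleftrightarrow> w \<in> (\<lambda>u. u @ [x]) ` nc_supp F"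
    by (cases w rule: rev_cases) (auto simp: nc_supp_def)
qed

lemma inj_snoc: "inj_on (\<lambda>u. u @ [x]) A" by (auto simp: inj_on_def)

lemma shK_left: "shK K (nc_mult f (word [x])) g = shK (\<lambda>u v. K (u @ [x]) v) f g"
  unfolding shK_def supp_rm by (simp add: sum.reindex[OF inj_snoc])

lemma shK_right: "shK K f (nc_mult g (word [x])) = shK (\<lambda>u v. K u (v @ [x])) f g"
  unfolding shK_def supp_rm by (simp add: sum.reindex[OF inj_snoc])

lemma shK_Kadd: "shK (\<lambda>u v. nc_add (K1 u v) (K2 u v)) f g = nc_add (shK K1 f g) (shK K2 f g)"
  by (auto simp: shK_def nc_add_def algebra_simps sum.distrib)
lemma shK_Ksmul: "shK (\<lambda>u v. nc_smul c (K u v)) f g = nc_smul c (shK K f g)"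
  by (auto simp: shK_def nc_smul_def algebra_simps sum_distrib_left)
lemma shK_Kletter: "shK (\<lambda>u v. nc_mult (K u v) (word [x])) f g = nc_mult (shK K f g) (word [x])"
proof
  fix w show "shK (\<lambda>u v. nc_mult (K u v) (word [x])) f g w = nc_mult (shK K f g) (word [x]) w"
    by (cases w rule: rev_cases) (auto simp: shK_def)
qed

lemma sh_rb: "sh f (nc_mult g (word [Lb])) = nc_mult (sh f g) (word [Lb])"
  by (simp add: sh_shK shK_right shw_b_right shK_Kletter)
lemma sh_lb: "sh (nc_mult f (word [Lb])) g = nc_mult (sh f g) (word [Lb])"
  by (simp add: sh_shK shK_left shw_b_left shK_Kletter)
lemma sh_aa: "sh (nc_mult f (word [La])) (nc_mult g (word [La])) =
   nc_mult (nc_add (nc_add (sh (nc_mult f (word [La])) g) (sh f (nc_mult g (word [La]))))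
      (nc_smul hbar (sh f g))) (word [La])"
  by (simp add: sh_shK shK_left shK_right shw_aa shK_Kletter shK_Kadd shK_Ksmul)

lemma sh_zero_left[simp]: "sh nc_zero g = nc_zero"
  by (auto simp: sh_def nc_supp_def nc_zero_def)
lemma sh_zero_right[simp]: "sh f nc_zero = nc_zero"
  by (auto simp: sh_def nc_supp_def nc_zero_def)


lemma nc_zero_apply[simp]: "nc_zero w = 0" by (simp add: nc_zero_def)
lemma nc_mult_zero_left_apply[simp]: "nc_mult nc_zero H w = 0" by (simp add: nc_mult_zero_left)
lemma nc_mult_zero_right_apply[simp]: "nc_mult H nc_zero w = 0" by (simp add: nc_mult_zero_right)
lemma sh_zero_left_apply[simp]: "sh nc_zero g w = 0" by simp
lemma sh_zero_right_apply[simp]: "sh f nc_zero w = 0" by simp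

lemma sum_single:
  fixes G :: "nat \<Rightarrow> 'a::comm_monoid_add"
  assumes "a \<le> i" "\<And>k. k \<le> i \<Longrightarrow> k \<noteq> a \<Longrightarrow> G k = 0"
  shows "(\<Sum>k\<le>i. G k) = G a"
proof -
  have "(\<Sum>k\<le>i. G k) = (\<Sum>k\<le>i. if k = a then G k else 0)"
    by (rule sum.cong) (use assms in auto)
  also have "\<dots> = G a" using assms(1) by (simp add: sum.delta)
  finally show ?thesis .
qed

lemma sum_small:
  fixes G :: "nat \<Rightarrow> 'a::comm_monoid_add"
  assumes "\<And>k. k \<ge> 2 \<Longrightarrow> G k = 0"
  shows "(\<Sum>k\<le>i. G k) = G 0 + (if 1 \<le> i then G 1 else 0)"
proof (induction i)
  case 0 then show ?case by simp
next
  case (Suc i) then show ?case using assms[of "Suc i"] by (cases i) auto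
qed

definition shX :: "ser \<Rightarrow> ser" where "shX F = (\<lambda>i j. if i = 0 then nc_zero else F (i - 1) j)"
definition shY :: "ser \<Rightarrow> ser" where "shY F = (\<lambda>i j. if j = 0 then nc_zero else F i (j - 1))"
definition Z3 :: "ser \<Rightarrow> ser" where
  "Z3 F = (\<lambda>i j. nc_add (nc_add (shX F i j) (shY F i j)) (nc_smul hbar (shX (shY F) i j)))"

lemma ser_mult_const_left: "ser_mult (ser_const f) G i j = nc_mult f (G i j)"
proof
  fix w
  have "\<And>i1. (\<Sum>j1\<le>j. nc_mult (ser_const f i1 j1) (G (i - i1) (j - j1)) w)
        = nc_mult (ser_const f i1 0) (G (i - i1) j) w"
    by (subst sum_single[of 0]) (auto simp: ser_const_def)
  then have "ser_mult (ser_const f) G i j w = (\<Sum>i1\<le>i. nc_mult (ser_const f i1 0) (G (i - i1) j) w)"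
    by (simp add: ser_mult_def)
  also have "\<dots> = nc_mult f (G i j) w"
    by (subst sum_single[of 0]) (auto simp: ser_const_def)
  finally show "ser_mult (ser_const f) G i j w = nc_mult f (G i j) w" .
qed

lemma ser_sh_const_left: "ser_sh (ser_const f) G i j = sh f (G i j)"
proof
  fix w
  have "\<And>i1. (\<Sum>j1\<le>j. sh (ser_const f i1 j1) (G (i - i1) (j - j1)) w)
        = sh (ser_const f i1 0) (G (i - i1) j) w"
    by (subst sum_single[of 0]) (auto simp: ser_const_def)
  then have "ser_sh (ser_const f) G i j w = (\<Sum>i1\<le>i. sh (ser_const f i1 0) (G (i - i1) j) w)"
    by (simp add: ser_sh_def)
  also have "\<dots> = sh f (G i j) w"
    by (subst sum_single[of 0]) (auto simp: ser_const_def)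
  finally show "ser_sh (ser_const f) G i j w = sh f (G i j) w" .
qed

lemma ser_sh_const_right: "ser_sh F (ser_const g) i j = sh (F i j) g"
proof
  fix w
  have "\<And>i1. i1 \<le> i \<Longrightarrow> (\<Sum>j1\<le>j. sh (F i1 j1) (ser_const g (i - i1) (j - j1)) w)
        = sh (F i1 j) (ser_const g (i - i1) 0) w"
    by (subst sum_single[of j]) (auto simp: ser_const_def)
  then have "ser_sh F (ser_const g) i j w = (\<Sum>i1\<le>i. sh (F i1 j) (ser_const g (i - i1) 0) w)"
    by (simp add: ser_sh_def)
  also have "\<dots> = sh (F i j) g w"
    by (subst sum_single[of i]) (auto simp: ser_const_def)
  finally show "ser_sh F (ser_const g) i j w = sh (F i j) g w" .
qed

lemma ser_sh_XY:
  "ser_sh (\<lambda>i j. if j = 0 then X i else nc_zero) (\<lambda>i j. if i = 0 then Y j else nc_zero) i j = sh (X i) (Y j)"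
proof
  fix w
  have "\<And>i1. i1 \<le> i \<Longrightarrow> (\<Sum>j1\<le>j. sh (if j1 = 0 then X i1 else nc_zero) (if i - i1 = 0 then Y (j - j1) else nc_zero) w)
        = sh (X i1) (if i - i1 = 0 then Y j else nc_zero) w"
    by (subst sum_single[of 0]) (auto simp:)
  then have "ser_sh (\<lambda>i j. if j = 0 then X i else nc_zero) (\<lambda>i j. if i = 0 then Y j else nc_zero) i j w
     = (\<Sum>i1\<le>i. sh (X i1) (if i - i1 = 0 then Y j else nc_zero) w)"
    by (simp add: ser_sh_def)
  also have "\<dots> = sh (X i) (Y j) w"
    by (subst sum_single[of i]) (auto simp:)
  finally show "ser_sh (\<lambda>i j. if j = 0 then X i else nc_zero) (\<lambda>i j. if i = 0 then Y j else nc_zero) i j w = sh (X i) (Y j) w" .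
qed

lemma ser_smul_1hX: "ser_smul sc_1hX F i j = nc_add (F i j) (nc_smul hbar (shX F i j))"
proof
  fix w
  have "\<And>i1. (\<Sum>j1\<le>j. sc_1hX i1 j1 * F (i - i1) (j - j1) w) = sc_1hX i1 0 * F (i - i1) j w"
    by (subst sum_single[of 0]) (auto simp: sc_1hX_def)
  then have "ser_smul sc_1hX F i j w = (\<Sum>i1\<le>i. sc_1hX i1 0 * F (i - i1) j w)"
    by (simp add: ser_smul_def)
  also have "\<dots> = nc_add (F i j) (nc_smul hbar (shX F i j)) w"
    by (subst sum_small) (auto simp: sc_1hX_def nc_add_def nc_smul_def shX_def)
  finally show "ser_smul sc_1hX F i j w = nc_add (F i j) (nc_smul hbar (shX F i j)) w" .
qed

lemma ser_smul_1hY: "ser_smul sc_1hY F i j = nc_add (F i j) (nc_smul hbar (shY F i j))"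
proof
  fix w
  have "\<And>i1. (\<Sum>j1\<le>j. sc_1hY i1 j1 * F (i - i1) (j - j1) w) = (if i1 = 0 then (\<Sum>j1\<le>j. sc_1hY 0 j1 * F i (j - j1) w) else 0)"
    by (auto simp: sc_1hY_def)
  then have "ser_smul sc_1hY F i j w = (\<Sum>i1\<le>i. if i1 = 0 then (\<Sum>j1\<le>j. sc_1hY 0 j1 * F i (j - j1) w) else 0)"
    by (simp add: ser_smul_def)
  also have "\<dots> = (\<Sum>j1\<le>j. sc_1hY 0 j1 * F i (j - j1) w)"
    by (subst sum_single[of 0]) auto
  also have "\<dots> = nc_add (F i j) (nc_smul hbar (shY F i j)) w"
    by (subst sum_small) (auto simp: sc_1hY_def nc_add_def nc_smul_def shY_def)
  finally show "ser_smul sc_1hY F i j w = nc_add (F i j) (nc_smul hbar (shY F i j)) w" .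
qed


lemma sc_mult_X: "sc_mult scX d i j = (if i = 0 then 0 else d (i - 1) j)"
proof -
  have "\<And>i1. (\<Sum>j1\<le>j. scX i1 j1 * d (i - i1) (j - j1)) = scX i1 0 * d (i - i1) j"
    by (subst sum_single[of 0]) (auto simp: scX_def)
  then have "sc_mult scX d i j = (\<Sum>i1\<le>i. scX i1 0 * d (i - i1) j)" by (simp add: sc_mult_def)
  also have "\<dots> = (if i = 0 then 0 else d (i - 1) j)"
    by (subst sum_small) (auto simp: scX_def)
  finally show ?thesis .
qed

lemma sc_mult_Y: "sc_mult scY d i j = (if j = 0 then 0 else d i (j - 1))"
proof -
  have "\<And>i1. (\<Sum>j1\<le>j. scY i1 j1 * d (i - i1) (j - j1)) = (if i1 = 0 then (\<Sum>j1\<le>j. scY 0 j1 * d i (j - j1)) else 0)"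
    by (auto simp: scY_def)
  then have "sc_mult scY d i j = (\<Sum>i1\<le>i. if i1 = 0 then (\<Sum>j1\<le>j. scY 0 j1 * d i (j - j1)) else 0)"
    by (simp add: sc_mult_def)
  also have "\<dots> = (\<Sum>j1\<le>j. scY 0 j1 * d i (j - j1))"
    by (subst sum_single[of 0]) auto
  also have "\<dots> = (if j = 0 then 0 else d i (j - 1))"
    by (subst sum_small) (auto simp: scY_def)
  finally show ?thesis .
qed

lemma sc_mult_XYh: "sc_mult scXYh d i j = (if i = 0 then 0 else d (i - 1) j) + (if j = 0 then 0 else d i (j - 1))
   + hbar * (if i = 0 \<or> j = 0 then 0 else d (i - 1) (j - 1))"
proof -
  have "\<And>i1. (\<Sum>j1\<le>j. scXYh i1 j1 * d (i - i1) (j - j1)) =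
      scXYh i1 0 * d (i - i1) j + (if 1 \<le> j then scXYh i1 1 * d (i - i1) (j - 1) else 0)"
    by (subst sum_small) (auto simp: scXYh_def)
  then have "sc_mult scXYh d i j = (\<Sum>i1\<le>i. scXYh i1 0 * d (i - i1) j + (if 1 \<le> j then scXYh i1 1 * d (i - i1) (j - 1) else 0))"
    by (simp add: sc_mult_def)
  also have "\<dots> = (if i = 0 then 0 else d (i - 1) j) + (if j = 0 then 0 else d i (j - 1))
   + hbar * (if i = 0 \<or> j = 0 then 0 else d (i - 1) (j - 1))"
    by (subst sum_small) (auto simp: scXYh_def)
  finally show ?thesis .
qed

lemma sc_pow_order:
  assumes "Z 0 0 = 0" shows "i + j < n \<Longrightarrow> sc_pow Z n i j = 0"
proof (induction n arbitrary: i j)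
  case 0 then show ?case by simp
next
  case (Suc n)
  have "\<And>i1 j1. i1 \<le> i \<Longrightarrow> j1 \<le> j \<Longrightarrow> Z i1 j1 * sc_pow Z n (i - i1) (j - j1) = 0"
  proof -
    fix i1 j1 assume "i1 \<le> i" "j1 \<le> j"
    show "Z i1 j1 * sc_pow Z n (i - i1) (j - j1) = 0"
    proof (cases "i1 = 0 \<and> j1 = 0")
      case True then show ?thesis using assms by simp
    next
      case False then have "(i - i1) + (j - j1) < n" using Suc.prems \<open>i1 \<le> i\<close> \<open>j1 \<le> j\<close> by auto
      then show ?thesis using Suc.IH by simp
    qed
  qed
  then show ?case by (auto intro!: sum.neutral simp: sc_mult_def)
qed

lemma geom_apply:
  assumes "Z 0 0 = 0"
  shows "geom Z i j w = (if w = replicate (length w) La then sc_pow Z (length w) i j else 0)"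
proof (cases "w = replicate (length w) La")
  case True
  have "geom Z i j w = (\<Sum>n\<le>i+j. if n = length w then sc_pow Z n i j else 0)"
    unfolding geom_def by (rule sum.cong) (use True in \<open>auto simp: word_apply\<close>)
  also have "\<dots> = (if length w \<le> i + j then sc_pow Z (length w) i j else 0)"
    by (simp add: sum.delta)
  also have "\<dots> = sc_pow Z (length w) i j" using sc_pow_order[where Z=Z, OF assms, of i j "length w"] by auto
  finally show ?thesis using True by simp
next
  case False
  have "geom Z i j w = (\<Sum>n\<le>i+j. 0)"
    unfolding geom_def by (rule sum.cong) (use False in \<open>auto simp: word_apply\<close>)
  then show ?thesis using False by simp
qed

lemma sc_pow_X: "sc_pow scX n i j = (if i = n \<and> j = 0 then 1 else 0)"
  by (induction n arbitrary: i j) (auto simp: sc_one_def sc_mult_X)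
lemma sc_pow_Y: "sc_pow scY n i j = (if i = 0 \<and> j = n then 1 else 0)"
  by (induction n arbitrary: i j) (auto simp: sc_one_def sc_mult_Y)

lemma scX00: "scX 0 0 = 0" by (simp add: scX_def)
lemma scY00: "scY 0 0 = 0" by (simp add: scY_def)

lemma geom_X: "geom scX i j = (if j = 0 then word (replicate i La) else nc_zero)"
proof
  fix w show "geom scX i j w = (if j = 0 then word (replicate i La) else nc_zero) w"
    by (subst geom_apply[where Z=scX, OF scX00]) (auto simp: sc_pow_X word_apply )
qed
lemma geom_Y: "geom scY i j = (if i = 0 then word (replicate j La) else nc_zero)"
proof
  fix w show "geom scY i j w = (if i = 0 then word (replicate j La) else nc_zero) w"
    by (subst geom_apply[where Z=scY, OF scY00]) (auto simp: sc_pow_Y word_apply )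
qed

lemma replicate_snoc_iff: "(p @ [y] = replicate (Suc (length p)) La) \<longleftrightarrow> (y = La \<and> p = replicate (length p) La)"
  by (metis append1_eq_conv replicate_Suc replicate_append_same)

lemma geom_XYh_rec:
  "geom scXYh i j = nc_add (if i = 0 \<and> j = 0 then word [] else nc_zero) (nc_mult (Z3 (geom scXYh) i j) (word [La]))"
proof
  fix w
  have Z0: "scXYh 0 0 = 0" by (simp add: scXYh_def)
  show "geom scXYh i j w = nc_add (if i = 0 \<and> j = 0 then word [] else nc_zero) (nc_mult (Z3 (geom scXYh) i j) (word [La])) w"
  proof (cases w rule: rev_cases)
    case Nil then show ?thesis by (simp add: geom_apply[where Z=scXYh, OF Z0] nc_add_def sc_one_def word_apply)
  next
    case (snoc p y)
    show ?thesis
      unfolding snoc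
      by (simp add: geom_apply[where Z=scXYh, OF Z0] nc_add_def word_apply replicate_snoc_iff Z3_def shX_def shY_def
          nc_smul_def sc_mult_XYh del: replicate.simps)
  qed
qed


lemma ser_mult_add: "ser_mult C (\<lambda>i j. nc_add (F i j) (G i j)) i j = nc_add (ser_mult C F i j) (ser_mult C G i j)"
  by (simp add: ser_mult_def nc_mult_add_right) (simp add: nc_add_def sum.distrib)
lemma ser_mult_smul: "ser_mult C (\<lambda>i j. nc_smul c (F i j)) i j = nc_smul c (ser_mult C F i j)"
  by (simp add: ser_mult_def nc_mult_smul_right) (simp add: nc_smul_def sum_distrib_left)
lemma ser_mult_letter: "ser_mult C (\<lambda>i j. nc_mult (F i j) (word [x])) i j = nc_mult (ser_mult C F i j) (word [x])"
proof
  fix w show "ser_mult C (\<lambda>i j. nc_mult (F i j) (word [x])) i j w = nc_mult (ser_mult C F i j) (word [x]) w"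
    by (cases w rule: rev_cases) (auto simp: ser_mult_def nc_mult_assoc_letter)
qed
lemma ser_mult_delta: "ser_mult C (\<lambda>i j. if i = 0 \<and> j = 0 then g else nc_zero) i j = nc_mult (C i j) g"
proof
  fix w
  have "\<And>i1. i1 \<le> i \<Longrightarrow> (\<Sum>j1\<le>j. nc_mult (C i1 j1) (if i - i1 = 0 \<and> j - j1 = 0 then g else nc_zero) w)
        = nc_mult (C i1 j) (if i - i1 = 0 then g else nc_zero) w"
    by (subst sum_single[of j]) auto
  then have "ser_mult C (\<lambda>i j. if i = 0 \<and> j = 0 then g else nc_zero) i j w
     = (\<Sum>i1\<le>i. nc_mult (C i1 j) (if i - i1 = 0 then g else nc_zero) w)"
    by (simp add: ser_mult_def)
  also have "\<dots> = nc_mult (C i j) g w"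
    by (subst sum_single[of i]) auto
  finally show "ser_mult C (\<lambda>i j. if i = 0 \<and> j = 0 then g else nc_zero) i j w = nc_mult (C i j) g w" .
qed

lemma ser_mult_shX: "ser_mult C (shX F) = shX (ser_mult C F)"
proof (intro ext)
  fix i j w
  show "ser_mult C (shX F) i j w = shX (ser_mult C F) i j w"
  proof (cases i)
    case 0 then show ?thesis by (simp add: ser_mult_def shX_def)
  next
    case (Suc i')
    have "ser_mult C (shX F) i j w = (\<Sum>i1\<le>i'. \<Sum>j1\<le>j. nc_mult (C i1 j1) (shX F (Suc i' - i1) (j - j1)) w)"
      by (simp add: ser_mult_def Suc shX_def)
    also have "\<dots> = (\<Sum>i1\<le>i'. \<Sum>j1\<le>j. nc_mult (C i1 j1) (F (i' - i1) (j - j1)) w)"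
      by (rule sum.cong[OF refl], rule sum.cong[OF refl]) (simp add: shX_def Suc_diff_le)
    finally show ?thesis by (simp add: Suc shX_def ser_mult_def)
  qed
qed

lemma ser_mult_shY: "ser_mult C (shY F) = shY (ser_mult C F)"
proof (intro ext)
  fix i j w
  show "ser_mult C (shY F) i j w = shY (ser_mult C F) i j w"
  proof (cases j)
    case 0 then show ?thesis by (simp add: ser_mult_def shY_def)
  next
    case (Suc j')
    have "ser_mult C (shY F) i j w = (\<Sum>i1\<le>i. \<Sum>j1\<le>j'. nc_mult (C i1 j1) (shY F (i - i1) (Suc j' - j1)) w)"
      by (simp add: ser_mult_def Suc shY_def)
    also have "\<dots> = (\<Sum>i1\<le>i. \<Sum>j1\<le>j'. nc_mult (C i1 j1) (F (i - i1) (j' - j1)) w)"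
      by (rule sum.cong[OF refl], rule sum.cong[OF refl]) (simp add: shY_def Suc_diff_le)
    finally show ?thesis by (simp add: Suc shY_def ser_mult_def)
  qed
qed

lemma ser_mult_Z3: "ser_mult C (Z3 F) i j = Z3 (ser_mult C F) i j"
proof -
  have "ser_mult C (Z3 F) i j = nc_add (nc_add (ser_mult C (shX F) i j) (ser_mult C (shY F) i j))
          (nc_smul hbar (ser_mult C (shX (shY F)) i j))"
    unfolding Z3_def by (simp add: ser_mult_add ser_mult_smul)
  then show ?thesis by (simp add: ser_mult_shX ser_mult_shY Z3_def)
qed

lemma nc_mult_Z3: "nc_mult H (Z3 F i j) = Z3 (\<lambda>i j. nc_mult H (F i j)) i j"
  by (simp add: Z3_def shX_def shY_def nc_mult_add_right nc_mult_smul_right nc_mult_zero_right)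

lemma E_rec:
  "nc_mult g1 (geom scXYh i j) = nc_add (if i = 0 \<and> j = 0 then g1 else nc_zero)
      (nc_mult (Z3 (\<lambda>i j. nc_mult g1 (geom scXYh i j)) i j) (word [La]))"
  apply (subst geom_XYh_rec)
  apply (simp add: nc_mult_add_right nc_mult_assoc_letter nc_mult_Z3 nc_mult_zero_right)
  done

lemma R_rec:
  assumes "\<And>i j. E i j = nc_add (if i = 0 \<and> j = 0 then g else nc_zero) (nc_mult (Z3 E i j) (word [La]))"
  shows "ser_mult C E i j = nc_add (nc_mult (C i j) g) (nc_mult (Z3 (ser_mult C E) i j) (word [La]))"
proof -
  have "E = (\<lambda>i j. nc_add (if i = 0 \<and> j = 0 then g else nc_zero) (nc_mult (Z3 E i j) (word [La])))"
    using assms by (intro ext) simp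
  then have "ser_mult C E i j = ser_mult C (\<lambda>i j. nc_add (if i = 0 \<and> j = 0 then g else nc_zero) (nc_mult (Z3 E i j) (word [La]))) i j"
    by metis
  also have "\<dots> = nc_add (nc_mult (C i j) g) (nc_mult (Z3 (ser_mult C E) i j) (word [La]))"
    by (simp add: ser_mult_add ser_mult_delta ser_mult_letter ser_mult_Z3)
  finally show ?thesis .
qed

lemma uniq:
  assumes L: "\<And>i j. L i j = nc_add (D i j) (nc_mult (Z3 L i j) (word [La]))"
      and R: "\<And>i j. R i j = nc_add (D i j) (nc_mult (Z3 R i j) (word [La]))"
  shows "L = R"
proof -
  have "\<forall>i j. i + j < N \<longrightarrow> L i j = R i j" for N
  proof (induction N)
    case 0 then show ?case by simp
  next
    case (Suc N)
    show ?case
    proof (intro allI impI)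
      fix i j assume "i + j < Suc N"
      have "Z3 L i j = Z3 R i j"
        using Suc.IH \<open>i + j < Suc N\<close> by (auto simp: Z3_def shX_def shY_def)
      then show "L i j = R i j" by (subst L, subst R) simp
    qed
  qed
  then have "\<And>i j. L i j = R i j" by (metis lessI)
  then show ?thesis by (intro ext) simp
qed


definition Ub :: "nc \<Rightarrow> nat \<Rightarrow> nc" where "Ub f n = nc_mult f (word (Lb # replicate n La))"

lemma Ub_Suc: "Ub f (Suc n) = nc_mult (Ub f n) (word [La])"
  by (simp add: Ub_def nc_mult_word_word replicate_append_same)
lemma Ub_0: "Ub f 0 = nc_mult f (word [Lb])"
  by (simp add: Ub_def)

lemma A_eq: "ser_mult (ser_const (nc_mult u g1)) (geom scX) = (\<lambda>i j. if j = 0 then Ub u (Suc i) else nc_zero)"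
proof (intro ext)
  fix i j w show "ser_mult (ser_const (nc_mult u g1)) (geom scX) i j w = (if j = 0 then Ub u (Suc i) else nc_zero) w"
    by (simp add: ser_mult_const_left geom_X g1_def nc_mult_word_word Ub_def)
qed
lemma B_eq: "ser_mult (ser_const (nc_mult v g1)) (geom scY) = (\<lambda>i j. if i = 0 then Ub v (Suc j) else nc_zero)"
proof (intro ext)
  fix i j w show "ser_mult (ser_const (nc_mult v g1)) (geom scY) i j w = (if i = 0 then Ub v (Suc j) else nc_zero) w"
    by (simp add: ser_mult_const_left geom_Y g1_def nc_mult_word_word Ub_def)
qed

theorem lemma3p10:
  fixes u v :: nc
  assumes "nc_fin u" and "nc_fin v"
  shows "ser_sh (ser_mult (ser_const (nc_mult u g1)) (geom scX))
                (ser_mult (ser_const (nc_mult v g1)) (geom scY))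
       = ser_mult
           (ser_add
             (ser_add
               (ser_smul sc_1hX (ser_sh (ser_mult (ser_const (nc_mult u g1)) (geom scX)) (ser_const v)))
               (ser_smul sc_1hY (ser_sh (ser_const u) (ser_mult (ser_const (nc_mult v g1)) (geom scY)))))
             (ser_const (nc_mult (sh u v) (nc_diff e1 g1))))
           (ser_mult (ser_const g1) (geom scXYh))"
proof -
  define L where "L = (\<lambda>i j. sh (Ub u (Suc i)) (Ub v (Suc j)))"
  define P where "P = ser_sh (ser_mult (ser_const (nc_mult u g1)) (geom scX)) (ser_const v)"
  define Q where "Q = ser_sh (ser_const u) (ser_mult (ser_const (nc_mult v g1)) (geom scY))"
  define K where "K = nc_mult (sh u v) (nc_diff e1 g1)"
  define C where "C = ser_add (ser_add (ser_smul sc_1hX P) (ser_smul sc_1hY Q)) (ser_const K)"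
  define E where "E = (\<lambda>i j. nc_mult g1 (geom scXYh i j))"
  have LHS: "ser_sh (ser_mult (ser_const (nc_mult u g1)) (geom scX))
                (ser_mult (ser_const (nc_mult v g1)) (geom scY)) = L"
    unfolding A_eq B_eq L_def by (intro ext) (simp only: ser_sh_XY)
  have E_eq: "ser_mult (ser_const g1) (geom scXYh) = E"
    unfolding E_def by (intro ext) (simp add: ser_mult_const_left)
  have Rrec: "\<And>i j. ser_mult C E i j = nc_add (nc_mult (C i j) g1) (nc_mult (Z3 (ser_mult C E) i j) (word [La]))"
    by (rule R_rec) (simp add: E_def E_rec[symmetric])
  have P_eq: "\<And>i j. P i j = (if j = 0 then sh (Ub u (Suc i)) v else nc_zero)"
    by (simp add: P_def ser_sh_const_right A_eq)
  have Q_eq: "\<And>i j. Q i j = (if i = 0 then sh u (Ub v (Suc j)) else nc_zero)"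
    by (simp add: Q_def ser_sh_const_left B_eq)
  have K_eq: "K = nc_smul hbar (nc_mult (sh u v) (word [Lb]))"
    by (simp add: K_def diff_e1_g1 nc_mult_smul_right)
  have C_eq: "\<And>i j. C i j = nc_add (nc_add (nc_add (P i j) (nc_smul hbar (shX P i j)))
       (nc_add (Q i j) (nc_smul hbar (shY Q i j)))) (if i = 0 \<and> j = 0 then K else nc_zero)"
    by (simp add: C_def ser_add_def ser_const_def ser_smul_1hX ser_smul_1hY)
  have b1: "\<And>n. sh (Ub u (Suc n)) (Ub v 0) = nc_mult (sh (Ub u (Suc n)) v) (word [Lb])"
    by (simp add: Ub_0 sh_rb)
  have b2: "\<And>m. sh (Ub u 0) (Ub v (Suc m)) = nc_mult (sh u (Ub v (Suc m))) (word [Lb])"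
    by (simp add: Ub_0 sh_lb)
  have b00: "sh (Ub u 0) (Ub v 0) = nc_mult (nc_mult (sh u v) (word [Lb])) (word [Lb])"
    by (simp add: Ub_0 sh_lb sh_rb)
  have Lrec: "\<And>i j. L i j = nc_add (nc_mult (C i j) g1) (nc_mult (Z3 L i j) (word [La]))"
  proof -
    fix i j
    have step: "L i j = nc_mult (nc_add (nc_add (sh (Ub u (Suc i)) (Ub v j)) (sh (Ub u i) (Ub v (Suc j))))
        (nc_smul hbar (sh (Ub u i) (Ub v j)))) (word [La])"
      by (simp add: L_def Ub_Suc sh_aa)
    have g1: "nc_mult (C i j) g1 = nc_mult (nc_mult (C i j) (word [Lb])) (word [La])"
      by (simp add: g1_def nc_mult_word_word)
    have inner: "nc_add (nc_add (sh (Ub u (Suc i)) (Ub v j)) (sh (Ub u i) (Ub v (Suc j))))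
        (nc_smul hbar (sh (Ub u i) (Ub v j))) = nc_add (nc_mult (C i j) (word [Lb])) (Z3 L i j)"
    proof (intro ext)
      fix w
      show "nc_add (nc_add (sh (Ub u (Suc i)) (Ub v j)) (sh (Ub u i) (Ub v (Suc j))))
        (nc_smul hbar (sh (Ub u i) (Ub v j))) w = nc_add (nc_mult (C i j) (word [Lb])) (Z3 L i j) w"
        apply (cases i; cases j)
        apply (simp_all add: C_eq P_eq Q_eq K_eq Z3_def shX_def shY_def L_def b1 b2 b00
              nc_mult_add_left nc_mult_smul_left nc_mult_zero_left)
        apply (simp_all add: nc_add_def nc_smul_def algebra_simps)
        done
    qed
    show "L i j = nc_add (nc_mult (C i j) g1) (nc_mult (Z3 L i j) (word [La]))"
      by (simp add: step g1 inner nc_mult_add_left[symmetric])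
  qed
  have "L = ser_mult C E" by (rule uniq[OF Lrec Rrec])
  then show ?thesis
    by (simp add: LHS E_eq C_def P_def Q_def K_def)
qed

end
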